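(* Let $L$ be a pentagonal linkage and let $q_1,q_2,q_4>0$ be fixed. Place charges $(q_1,q_2,t,q_4,s)$ at the vertices $A_1,\dots,A_5$, giving the effective Coulomb potential $$E=\frac{q_1q_4}{|A_1A_4|}+\frac{q_2q_4}{|A_2A_4|}+\frac{q_1t}{|A_1A_3|}+\frac{q_2s}{|A_2A_5|}+\frac{st}{|A_3A_5|}.$$ Then for each convex configuration $P\in M^C(L)$ there exists exactly one pair $(s,t)\in(\mathbb{R}_{>0})^2$ such that $P$ is a critical point of $E$ on $M(L)$.
   Context: A pentagonal linkage $L$ is given by side lengths $a_1,\dots,a_5>0$; $M(L)$ is the set of planar 5-gons $(A_1,\dots,A_5)$ with $|A_iA_{i+1}|=a_i$ (indices mod 5) modulo all isometries of $\mathbb{R}^2$. $M^C(L)$ is the set of strictly convex configurations (convex pentagon $A_1\dots A_5$ in this cyclic order, no angle equal to $\pi$); near such points $M(L)$ is a smooth surface, and a critical point means the differential of $E$ restricted to $M(L)$ vanishes there. *)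

theory Defs
  imports "HOL-Analysis.Analysis"
begin

text \<open>A planar pentagon is a map A :: nat => complex; only the vertices
  A 0, ..., A 4 (standing for A_1, ..., A_5) matter.  Indices are mod 5.
  Side lengths a 0, ..., a 4 stand for a_1, ..., a_5.\<close>

definition in_config :: "(nat \<Rightarrow> real) \<Rightarrow> (nat \<Rightarrow> complex) \<Rightarrow> bool" where
  "in_config a A \<longleftrightarrow> (\<forall>i<5. cmod (A (Suc i mod 5) - A i) = a i)"

definition cross :: "complex \<Rightarrow> complex \<Rightarrow> real" where
  "cross u v = Im (cnj u * v)"

definition strictly_convex :: "(nat \<Rightarrow> complex) \<Rightarrow> bool" where
  "strictly_convex A \<longleftrightarrow>
     (\<forall>i<5. \<forall>j<5. j \<noteq> i \<and> j \<noteq> Suc i mod 5 \<longrightarrow>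
         cross (A (Suc i mod 5) - A i) (A j - A i) > 0) \<or>
     (\<forall>i<5. \<forall>j<5. j \<noteq> i \<and> j \<noteq> Suc i mod 5 \<longrightarrow>
         cross (A (Suc i mod 5) - A i) (A j - A i) < 0)"

definition coulomb :: "real \<Rightarrow> real \<Rightarrow> real \<Rightarrow> real \<Rightarrow> real \<Rightarrow> (nat \<Rightarrow> complex) \<Rightarrow> real" where
  "coulomb q1 q2 t q4 s A =
     q1 * q4 / cmod (A 0 - A 3) + q2 * q4 / cmod (A 1 - A 3) + q1 * t / cmod (A 0 - A 2)
     + q2 * s / cmod (A 1 - A 4) + s * t / cmod (A 2 - A 4)"

text \<open>P is a critical point of f on the configuration space M(L): for every curve
  in the configuration space through P that is differentiable at 0, the derivative
  of f along the curve at 0 vanishes (i.e. df vanishes on the tangent space).\<close>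
definition critical_on_config ::
  "(nat \<Rightarrow> real) \<Rightarrow> ((nat \<Rightarrow> complex) \<Rightarrow> real) \<Rightarrow> (nat \<Rightarrow> complex) \<Rightarrow> bool" where
  "critical_on_config a f P \<longleftrightarrow>
     (\<forall>(\<gamma> :: real \<Rightarrow> nat \<Rightarrow> complex) (v :: nat \<Rightarrow> complex).
        (\<forall>i<5. \<gamma> 0 i = P i) \<and>
        (\<forall>i<5. ((\<lambda>\<tau>. \<gamma> \<tau> i) has_vector_derivative v i) (at 0)) \<and>
        (\<forall>\<^sub>F \<tau> in nhds 0. in_config a (\<gamma> \<tau>))
        \<longrightarrow> ((\<lambda>\<tau>. f (\<gamma> \<tau>)) has_real_derivative 0) (at 0))"

end

theory Submission
  imports Defs
begin


lemma dist_deriv: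
  fixes f :: "real \<Rightarrow> complex"
  assumes "(f has_vector_derivative v) (at 0)" "f 0 \<noteq> 0"
  shows "((\<lambda>\<tau>. cmod (f \<tau>)) has_real_derivative (inner (f 0) v / cmod (f 0))) (at 0)"
proof -
  have n: "(norm has_derivative (\<lambda>h. inner h (sgn (f 0)))) (at (f 0))"
    using has_derivative_norm[OF assms(2)] by simp
  have "((\<lambda>\<tau>. norm (f \<tau>)) has_derivative (\<lambda>x. inner (x *\<^sub>R v) (sgn (f 0)))) (at 0)"
    using has_derivative_compose[OF assms(1)[unfolded has_vector_derivative_def] n] by simp
  then show ?thesis unfolding has_field_derivative_def
    by (rule has_derivative_eq_rhs) (auto simp: fun_eq_iff sgn_div_norm inner_commute field_simps)
qed

lemma term_deriv:
  fixes f :: "real \<Rightarrow> complex"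
  assumes "(f has_vector_derivative v) (at 0)" "f 0 \<noteq> 0"
  shows "((\<lambda>\<tau>. w / cmod (f \<tau>)) has_real_derivative (- w * inner (f 0) v / cmod (f 0)^3)) (at 0)"
proof -
  have "((\<lambda>\<tau>. w / cmod (f \<tau>)) has_real_derivative
      ((0 * cmod (f 0) - w * (inner (f 0) v / cmod (f 0))) / (cmod (f 0) * cmod (f 0)))) (at 0)"
    by (rule DERIV_divide[OF DERIV_const dist_deriv[OF assms]]) (use assms(2) in simp)
  then show ?thesis using assms(2) by (simp add: power3_eq_cube field_simps)
qed

lemma term_ij:
  fixes g h :: "real \<Rightarrow> complex"
  assumes "(g has_vector_derivative vi) (at 0)" "(h has_vector_derivative vj) (at 0)" "g 0 \<noteq> h 0"
  shows "((\<lambda>\<tau>. w / cmod (g \<tau> - h \<tau>)) has_real_derivative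
           (- w * inner (g 0 - h 0) (vi - vj) / cmod (g 0 - h 0)^3)) (at 0)"
  using term_deriv[of "\<lambda>\<tau>. g \<tau> - h \<tau>", OF has_vector_derivative_diff[OF assms(1,2)]] assms(3)
  by simp

lemma const_deriv_zero:
  fixes g :: "real \<Rightarrow> real"
  assumes "(g has_real_derivative D) (at 0)" "\<forall>\<^sub>F \<tau> in nhds 0. g \<tau> = c"
  shows "D = 0"
proof -
  have "((\<lambda>_. c) has_real_derivative D) (at 0)"
    using DERIV_cong_ev[of 0 0 g "\<lambda>_. c" D D] assms by simp
  then show ?thesis using DERIV_unique DERIV_const by blast
qed

definition Dc :: "real \<Rightarrow> real \<Rightarrow> real \<Rightarrow> real \<Rightarrow> real \<Rightarrow> (nat \<Rightarrow> complex) \<Rightarrow> (nat \<Rightarrow> complex) \<Rightarrow> real" where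
  "Dc q1 q2 t q4 s P v = 
    - (q1 * q4) * inner (P 0 - P 3) (v 0 - v 3) / cmod (P 0 - P 3)^3
    + - (q2 * q4) * inner (P 1 - P 3) (v 1 - v 3) / cmod (P 1 - P 3)^3
    + - (q1 * t) * inner (P 0 - P 2) (v 0 - v 2) / cmod (P 0 - P 2)^3
    + - (q2 * s) * inner (P 1 - P 4) (v 1 - v 4) / cmod (P 1 - P 4)^3
    + - (s * t) * inner (P 2 - P 4) (v 2 - v 4) / cmod (P 2 - P 4)^3"

lemma coulomb_deriv:
  assumes d: "\<forall>i<5. ((\<lambda>\<tau>. \<gamma> \<tau> i) has_vector_derivative v i) (at 0)" and g0: "\<forall>i<5. \<gamma> 0 i = P i"
   and "P 0 \<noteq> P 3" "P 1 \<noteq> P 3" "P 0 \<noteq> P 2" "P 1 \<noteq> P 4" "P 2 \<noteq> P 4"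
  shows "((\<lambda>\<tau>. coulomb q1 q2 t q4 s (\<gamma> \<tau>)) has_real_derivative Dc q1 q2 t q4 s P v) (at 0)"
proof -
  have d0: "((\<lambda>\<tau>. \<gamma> \<tau> 0) has_vector_derivative v 0) (at 0)" using d by simp
  have d1: "((\<lambda>\<tau>. \<gamma> \<tau> 1) has_vector_derivative v 1) (at 0)" using d by simp
  have d2: "((\<lambda>\<tau>. \<gamma> \<tau> 2) has_vector_derivative v 2) (at 0)" using d by simp
  have d3: "((\<lambda>\<tau>. \<gamma> \<tau> 3) has_vector_derivative v 3) (at 0)" using d by simp
  have d4: "((\<lambda>\<tau>. \<gamma> \<tau> 4) has_vector_derivative v 4) (at 0)" using d by simp
  have e: "\<gamma> 0 0 = P 0" "\<gamma> 0 1 = P 1" "\<gamma> 0 2 = P 2" "\<gamma> 0 3 = P 3" "\<gamma> 0 4 = P 4" using g0 by auto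
  show ?thesis unfolding coulomb_def Dc_def
    apply (intro DERIV_add)
    using term_ij[OF d0 d3, where w="q1 * q4"] term_ij[OF d1 d3, where w="q2 * q4"] term_ij[OF d0 d2, where w="q1 * t"]
      term_ij[OF d1 d4, where w="q2 * s"] term_ij[OF d2 d4, where w="s * t"] assms(3-) by (simp_all add: e[unfolded One_nat_def])
qed



definition C1e where
  "C1e p0 p1 p2 p3 p4 u02 u24 u03 u13 =
     cross (p3 - p2) (p3 - p4) * (u02 * cross (p2 - p1) (p2 - p0) + u24 * cross (p2 - p1) (p2 - p4))
     + (u03 * cross (p3 - p0) (p3 - p4) + u13 * cross (p3 - p1) (p3 - p4)) * cross (p2 - p1) (p3 - p2)"

definition C2e where
  "C2e p0 p1 p2 p3 p4 u14 u24 u03 u13 =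
     cross (p3 - p2) (p3 - p4) * (u14 * cross (p4 - p0) (p4 - p1) + u24 * cross (p4 - p0) (p4 - p2))
     + (u03 * cross (p3 - p2) (p3 - p0) + u13 * cross (p3 - p2) (p3 - p1)) * cross (p4 - p0) (p3 - p4)"

lemma motion1:
  fixes p0 p1 p2 p3 p4 v2 v3 :: complex
  assumes "v2 = \<i> * (p2 - p1)" "inner (p3 - p2) (v3 - v2) = 0" "inner (p4 - p3) (0 - v3) = 0"
    "u03 * inner (p0 - p3) (0 - v3) + u13 * inner (p1 - p3) (0 - v3) + u02 * inner (p0 - p2) (0 - v2)
      + u24 * inner (p2 - p4) (v2 - 0) = 0"
  shows "C1e p0 p1 p2 p3 p4 u02 u24 u03 u13 = 0"
  using assms(2-4) unfolding C1e_def assms(1)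
  by (simp add: cross_def inner_complex_def algebra_simps) algebra

lemma motion2:
  fixes p0 p1 p2 p3 p4 v4 v3 :: complex
  assumes "v4 = \<i> * (p4 - p0)" "inner (p3 - p2) (v3 - 0) = 0" "inner (p4 - p3) (v4 - v3) = 0"
    "u03 * inner (p0 - p3) (0 - v3) + u13 * inner (p1 - p3) (0 - v3) + u14 * inner (p1 - p4) (0 - v4)
      + u24 * inner (p2 - p4) (0 - v4) = 0"
  shows "C2e p0 p1 p2 p3 p4 u14 u24 u03 u13 = 0"
  using assms(2-4) unfolding C2e_def assms(1)
  by (simp add: cross_def inner_complex_def algebra_simps) algebra



lemma L_par:
  fixes e X :: complex
  assumes "cross e X = 0" "e \<noteq> 0"
  shows "\<exists>\<mu>::real. X = of_real \<mu> * e"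
proof -
  have n: "(Re e)^2 + (Im e)^2 \<noteq> 0" using assms(2)
    by (simp add: complex_eq_iff)
  define \<mu> where "\<mu> = inner e X / ((Re e)^2 + (Im e)^2)"
  have "X = of_real \<mu> * e"
    using assms(1) n unfolding \<mu>_def
    by (simp add: complex_eq_iff cross_def inner_complex_def field_simps power2_eq_square)
  then show ?thesis by blast
qed

lemma L_perp:
  fixes e Y w :: complex
  assumes "cross e Y = 0" "inner e w = 0" "e \<noteq> 0"
  shows "inner Y w = 0"
proof -
  have n: "(Re e)^2 + (Im e)^2 \<noteq> 0" using assms(3)
    by (simp add: complex_eq_iff)
  have "((Re e)^2 + (Im e)^2) * inner Y w = 0"
    using assms(1,2) by (simp add: cross_def inner_complex_def power2_eq_square) algebra
  then show ?thesis using n by (auto simp: complex_eq_iff)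
qed

lemma suff:
  fixes p0 p1 p2 p3 p4 v0 v1 v2 v3 v4 :: complex
  assumes c1: "C1e p0 p1 p2 p3 p4 u02 u24 u03 u13 = 0" and c2: "C2e p0 p1 p2 p3 p4 u14 u24 u03 u13 = 0"
    and K: "cross (p3 - p2) (p3 - p4) \<noteq> 0" and n: "p2 \<noteq> p1" "p4 \<noteq> p0" "p1 \<noteq> p0"
    and e0: "inner (p1 - p0) (v1 - v0) = 0" and e1: "inner (p2 - p1) (v2 - v1) = 0"
    and e2: "inner (p3 - p2) (v3 - v2) = 0" and e3: "inner (p4 - p3) (v4 - v3) = 0"
    and e4: "inner (p0 - p4) (v0 - v4) = 0"
  shows "u03 * inner (p0 - p3) (v0 - v3) + u13 * inner (p1 - p3) (v1 - v3) + u02 * inner (p0 - p2) (v0 - v2)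
      + u14 * inner (p1 - p4) (v1 - v4) + u24 * inner (p2 - p4) (v2 - v4) = 0"
proof -
  define K where "K = cross (p3 - p2) (p3 - p4)"
  define F0 where "F0 = of_real u02 * (p0 - p2) + of_real u03 * (p0 - p3)"
  define F1 where "F1 = of_real u13 * (p1 - p3) + of_real u14 * (p1 - p4)"
  define F2 where "F2 = of_real u02 * (p2 - p0) + of_real u24 * (p2 - p4)"
  define F3 where "F3 = of_real u03 * (p3 - p0) + of_real u13 * (p3 - p1)"
  define F4 where "F4 = of_real u14 * (p4 - p1) + of_real u24 * (p4 - p2)"
  define c1 where "c1 = cross F3 (p3 - p4)"
  define c2 where "c2 = cross (p3 - p2) F3"
  have "cross (p2 - p1) (of_real K * F2 + of_real c1 * (p3 - p2)) = 0"
    using c1 unfolding C1e_def K_def c1_def F2_def F3_def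
    by (simp add: cross_def algebra_simps)
  then obtain m2 where m2: "of_real K * F2 + of_real c1 * (p3 - p2) = of_real m2 * (p2 - p1)"
    using L_par n(1) by force
  have "cross (p4 - p0) (of_real K * F4 + of_real c2 * (p3 - p4)) = 0"
    using c2 unfolding C2e_def K_def c2_def F4_def F3_def
    by (simp add: cross_def algebra_simps)
  then obtain m4 where m4: "of_real K * F4 + of_real c2 * (p3 - p4) = of_real m4 * (p4 - p0)"
    using L_par n(2) by force
  have "cross (p1 - p0) (of_real K * F0 + of_real m4 * (p4 - p0)) = 0"
    using m2 m4 unfolding K_def c1_def c2_def F0_def F1_def F2_def F3_def F4_def
    by (simp add: cross_def complex_eq_iff algebra_simps) algebra
  then have y: "inner (of_real K * F0 + of_real m4 * (p4 - p0)) (v1 - v0) = 0"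
    using L_perp e0 n(3) by force
  have "K * (u03 * inner (p0 - p3) (v0 - v3) + u13 * inner (p1 - p3) (v1 - v3) + u02 * inner (p0 - p2) (v0 - v2)
      + u14 * inner (p1 - p4) (v1 - v4) + u24 * inner (p2 - p4) (v2 - v4)) = 0"
    using m2 m4 y e0 e1 e2 e3 e4 unfolding K_def c1_def c2_def F0_def F1_def F2_def F3_def F4_def
    by (simp add: cross_def inner_complex_def complex_eq_iff algebra_simps) algebra
  then show ?thesis using K unfolding K_def by simp
qed



lemma quad_root_sol:
  fixes A1 B1 G1 A2 B2 G2 t s :: real
  assumes pos: "A1 > 0" "B1 > 0" "G1 > 0" "A2 > 0" "B2 > 0" "G2 > 0" and "t > 0" "s > 0"
    and e1: "t * (A1 + s * B1) = G1" and e2: "s * (A2 + t * B2) = G2"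
  shows "A1 * B2 * t^2 + (A1 * A2 + B1 * G2 - G1 * B2) * t - G1 * A2 = 0"
proof -
  have "t * (A1 * (A2 + t * B2) + G2 * B1) = G1 * (A2 + t * B2)"
    by (simp only: e1[symmetric] e2[symmetric]) (simp add: algebra_simps)
  then show ?thesis by (simp add: algebra_simps power2_eq_square)
qed

lemma quad_unique:
  fixes A1 B1 G1 A2 B2 G2 :: real
  assumes pos: "A1 > 0" "B1 > 0" "G1 > 0" "A2 > 0" "B2 > 0" "G2 > 0"
  shows "\<exists>!st::real\<times>real. fst st > 0 \<and> snd st > 0 \<and>
     snd st * (A1 + fst st * B1) = G1 \<and> fst st * (A2 + snd st * B2) = G2"
proof
  define a where "a = A1 * B2"
  define b where "b = A1 * A2 + B1 * G2 - G1 * B2"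
  define c where "c = G1 * A2"
  have a: "a > 0" and c: "c > 0" using pos unfolding a_def c_def by auto
  define t where "t = (- b + sqrt (b^2 + 4 * a * c)) / (2 * a)"
  have sq: "sqrt (b^2 + 4 * a * c) > \<bar>b\<bar>"
    using a c by (metis add_less_same_cancel1 abs_of_nonneg real_sqrt_abs real_sqrt_less_iff
       zero_less_mult_iff abs_ge_zero mult_pos_pos zero_less_numeral less_add_same_cancel1)
  have tpos: "t > 0" unfolding t_def using sq a by (auto simp: divide_pos_pos)
  have sqe: "(sqrt (b^2 + 4 * a * c))^2 = b^2 + 4*a*c"
    using a c by (intro real_sqrt_pow2) (auto intro: add_nonneg_nonneg)
  have qt: "a * t^2 + b * t - c = 0"
    unfolding t_def using a sqe by (simp add: field_simps power2_eq_square) 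
  define s where "s = G2 / (A2 + t * B2)"
  have den: "A2 + t * B2 > 0" using pos tpos by (intro add_pos_pos mult_pos_pos)
  have spos: "s > 0" unfolding s_def using den pos by auto
  have e2: "s * (A2 + t * B2) = G2" unfolding s_def using den by simp
  have "t * (A1 * (A2 + t * B2) + G2 * B1) = G1 * (A2 + t * B2)"
    using qt unfolding a_def b_def c_def by (simp add: algebra_simps power2_eq_square)
  then have e1: "t * (A1 + s * B1) = G1" unfolding s_def using den
    by (simp add: field_simps)
  show "fst (s,t) > 0 \<and> snd (s,t) > 0 \<and> snd (s,t) * (A1 + fst (s,t) * B1) = G1 \<and> fst (s,t) * (A2 + snd (s,t) * B2) = G2"
    using spos tpos e1 e2 by simp
  fix st :: "real \<times> real"
  assume h: "fst st > 0 \<and> snd st > 0 \<and> snd st * (A1 + fst st * B1) = G1 \<and> fst st * (A2 + snd st * B2) = G2"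
  obtain s' t' where st: "st = (s', t')" by force
  have h': "s' > 0" "t' > 0" "t' * (A1 + s' * B1) = G1" "s' * (A2 + t' * B2) = G2" using h st by auto
  have q': "a * t'^2 + b * t' - c = 0"
    using quad_root_sol[OF pos h'(2,1,3,4)] unfolding a_def b_def c_def by simp
  have "t' = t"
  proof (rule ccontr)
    assume ne: "t' \<noteq> t"
    have "(t' - t) * (a * (t' + t) + b) = 0" using q' qt by (simp add: algebra_simps power2_eq_square)
    then have "a * (t' + t) + b = 0" using ne by simp
    then have bb: "b = - a * (t' + t)" by linarith
    have "c = a*t^2 + b*t" using qt by simp
    then have "c = - a * t * t'" unfolding bb by (simp add: algebra_simps power2_eq_square)
    have "a * t * t' > 0" using a tpos h'(2) by simp
    then show False using c \<open>c = - a * t * t'\<close> by linarith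
  qed
  moreover have "s' = s" using h'(4) den unfolding s_def \<open>t' = t\<close>
    by (simp add: eq_divide_eq)
  ultimately show "st = (s, t)" using st by simp
qed


lemma alg_num:
  fixes x1 x2 z1 z2 N :: real
  assumes "N = z1^2 + z2^2"
  shows "N + (x1^2 + x2^2) - ((x1 - z1)^2 + (x2 - z2)^2) = 2 * (x1 * z1 + x2 * z2)"
  using assms by (simp add: power2_eq_square algebra_simps)
lemma alg_A0:
  fixes x1 x2 z1 z2 N :: real
  assumes "N = z1^2 + z2^2" "N > 0"
  shows "(x1^2 + x2^2) / N - ((N + (x1^2 + x2^2) - ((x1 - z1)^2 + (x2 - z2)^2)) / (2 * N))^2
         = ((z1 * x2 - z2 * x1) / N)^2"
proof -
  have n: "N \<noteq> 0" using assms(2) by simp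
  have "(x1^2 + x2^2) / N - ((N + (x1^2 + x2^2) - ((x1 - z1)^2 + (x2 - z2)^2)) / (2 * N))^2
     = (N * (x1^2 + x2^2) - (x1 * z1 + x2 * z2)^2) / N^2"
    unfolding alg_num[OF assms(1)] using n by (simp add: field_simps power2_eq_square)
  also have "N * (x1^2 + x2^2) - (x1 * z1 + x2 * z2)^2 = (z1 * x2 - z2 * x1)^2"
    unfolding assms(1) by (simp add: power2_eq_square algebra_simps)
  finally show ?thesis by (simp add: power_divide)
qed
lemma alg_y0:
  fixes x1 x2 z1 z2 N :: real
  assumes "N = z1^2 + z2^2" "N > 0"
  shows "z1 * ((N + (x1^2 + x2^2) - ((x1 - z1)^2 + (x2 - z2)^2)) / (2 * N)) - z2 * ((z1 * x2 - z2 * x1) / N) = x1"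
    "z2 * ((N + (x1^2 + x2^2) - ((x1 - z1)^2 + (x2 - z2)^2)) / (2 * N)) + z1 * ((z1 * x2 - z2 * x1) / N) = x2"
proof -
  have n: "N \<noteq> 0" using assms(2) by simp
  have "z1 * ((N + (x1^2 + x2^2) - ((x1 - z1)^2 + (x2 - z2)^2)) / (2 * N)) - z2 * ((z1 * x2 - z2 * x1) / N)
     = (z1 * (x1 * z1 + x2 * z2) - z2 * (z1 * x2 - z2 * x1)) / N"
    unfolding alg_num[OF assms(1)] using n by (simp add: field_simps)
  also have "z1 * (x1 * z1 + x2 * z2) - z2 * (z1 * x2 - z2 * x1) = x1 * N"
    unfolding assms(1) by (simp add: power2_eq_square algebra_simps)
  finally show "z1 * ((N + (x1^2 + x2^2) - ((x1 - z1)^2 + (x2 - z2)^2)) / (2 * N)) - z2 * ((z1 * x2 - z2 * x1) / N) = x1"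
    using n by simp
  have "z2 * ((N + (x1^2 + x2^2) - ((x1 - z1)^2 + (x2 - z2)^2)) / (2 * N)) + z1 * ((z1 * x2 - z2 * x1) / N)
     = (z2 * (x1 * z1 + x2 * z2) + z1 * (z1 * x2 - z2 * x1)) / N"
    unfolding alg_num[OF assms(1)] using n by (simp add: field_simps)
  also have "z2 * (x1 * z1 + x2 * z2) + z1 * (z1 * x2 - z2 * x1) = x2 * N"
    unfolding assms(1) by (simp add: power2_eq_square algebra_simps)
  finally show "z2 * ((N + (x1^2 + x2^2) - ((x1 - z1)^2 + (x2 - z2)^2)) / (2 * N)) + z1 * ((z1 * x2 - z2 * x1) / N) = x2"
    using n by simp
qed
lemma alg_circ1:
  fixes z1 z2 N r s p :: real
  assumes "N = z1^2 + z2^2" "N \<noteq> 0" "s^2 = r^2 / N - p^2"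
  shows "(z1 * p - z2 * s)^2 + (z2 * p + z1 * s)^2 = r^2"
proof -
  have "(z1 * p - z2 * s)^2 + (z2 * p + z1 * s)^2 = N * (p^2 + s^2)" using assms(1) by (simp add: algebra_simps power2_eq_square)
  also have "\<dots> = r^2" using assms(2,3) by (simp add: field_simps)
  finally show ?thesis .
qed
lemma alg_circ2:
  fixes z1 z2 N r r' s p :: real
  assumes "N = z1^2 + z2^2" "N \<noteq> 0" "s^2 = r^2 / N - p^2" "p = (N + r^2 - r'^2) / (2 * N)"
  shows "(z1 * p - z2 * s - z1)^2 + (z2 * p + z1 * s - z2)^2 = r'^2"
proof -
  have "(z1 * p - z2 * s - z1)^2 + (z2 * p + z1 * s - z2)^2 = N * (p^2 + s^2) - 2 * N * p + N"
    using assms(1) by (simp add: algebra_simps power2_eq_square)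
  moreover have "N * (p^2 + s^2) = r^2" using assms(2,3) by (simp add: field_simps)
  moreover have "2 * N * p = N + r^2 - r'^2" using assms(2,4) by (simp add: field_simps)
  ultimately show ?thesis by linarith
qed


lemma diff_Re: fixes f :: "real \<Rightarrow> complex"
  shows "f differentiable (at x) \<Longrightarrow> (\<lambda>\<tau>. Re (f \<tau>)) differentiable (at x)"
  by (rule differentiable_compose[OF bounded_linear_imp_differentiable[OF bounded_linear_Re]])
lemma diff_Im: fixes f :: "real \<Rightarrow> complex"
  shows "f differentiable (at x) \<Longrightarrow> (\<lambda>\<tau>. Im (f \<tau>)) differentiable (at x)"
  by (rule differentiable_compose[OF bounded_linear_imp_differentiable[OF bounded_linear_Im]])
lemma diff_of_real: fixes f :: "real \<Rightarrow> real"
  shows "f differentiable (at x) \<Longrightarrow> (\<lambda>\<tau>. complex_of_real (f \<tau>)) differentiable (at x)"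
  by (rule differentiable_compose[OF bounded_linear_imp_differentiable[OF bounded_linear_of_real]])
lemma diff_sqrt: fixes f :: "real \<Rightarrow> real"
  assumes "f differentiable (at x)" "f x > 0"
  shows "(\<lambda>\<tau>. sqrt (f \<tau>)) differentiable (at x)"
proof -
  have "sqrt differentiable (at (f x))"
    using DERIV_real_sqrt[OF assms(2)] by (auto simp: differentiable_def has_field_derivative_def)
  then show ?thesis using differentiable_compose assms(1) by blast
qed

lemma cont_pos_eventually:
  fixes f :: "real \<Rightarrow> real"
  assumes "continuous (at 0) f" "f 0 > 0"
  shows "\<forall>\<^sub>F \<tau> in nhds 0. f \<tau> > 0"
proof -
  have "(f \<longlongrightarrow> f 0) (at 0)" using assms(1) by (simp add: continuous_at)
  then have "\<forall>\<^sub>F \<tau> in at 0. f \<tau> > 0" using assms(2) order_tendstoD(1) by blast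
  then have "\<forall>\<^sub>F \<tau> in nhds 0. \<tau> \<noteq> 0 \<longrightarrow> f \<tau> > 0" by (simp add: eventually_at_filter)
  then show ?thesis by eventually_elim (use assms(2) in auto)
qed

lemma fourbar:
  fixes c :: "real \<Rightarrow> complex" and Q Y0 :: complex
  assumes cd: "c differentiable (at 0)" and ncol: "cross (c 0 - Q) (Y0 - Q) \<noteq> 0"
  shows "\<exists>y. y 0 = Y0 \<and> y differentiable (at 0) \<and>
    (\<forall>\<^sub>F \<tau> in nhds 0. cmod (y \<tau> - c \<tau>) = cmod (Y0 - c 0) \<and> cmod (y \<tau> - Q) = cmod (Y0 - Q))"
proof -
  define r1 where "r1 = cmod (Y0 - Q)"
  define r2 where "r2 = cmod (Y0 - c 0)"
  define N where "N \<tau> = (Re (c \<tau> - Q))^2 + (Im (c \<tau> - Q))^2" for \<tau>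
  define \<rho> where "\<rho> \<tau> = (N \<tau> + r1^2 - r2^2) / (2 * N \<tau>)" for \<tau>
  define A where "A \<tau> = r1^2 / N \<tau> - (\<rho> \<tau>)^2" for \<tau>
  define cr where "cr = cross (c 0 - Q) (Y0 - Q)"
  define \<sigma> where "\<sigma> \<tau> = sgn cr * sqrt (A \<tau>)" for \<tau>
  define y where "y \<tau> = Q + (c \<tau> - Q) * (of_real (\<rho> \<tau>) + \<i> * of_real (\<sigma> \<tau>))" for \<tau>
  have cq: "c 0 - Q \<noteq> 0" using ncol by (auto simp: cross_def)
  have N0: "N 0 > 0" unfolding N_def using cq
    by (simp add: complex_eq_iff sum_power2_gt_zero_iff)
  have dRI: "(\<lambda>\<tau>. Re (c \<tau> - Q)) differentiable (at 0)" "(\<lambda>\<tau>. Im (c \<tau> - Q)) differentiable (at 0)"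
    using diff_Re[OF differentiable_diff[OF cd differentiable_const]]
      diff_Im[OF differentiable_diff[OF cd differentiable_const]] by auto
  have dN: "N differentiable (at 0)" unfolding N_def[abs_def]
    using dRI by (intro differentiable_add differentiable_power)
  have d\<rho>: "\<rho> differentiable (at 0)" unfolding \<rho>_def[abs_def]
    using dN N0 by (intro differentiable_divide differentiable_add differentiable_diff differentiable_mult) auto
  have dA: "A differentiable (at 0)" unfolding A_def[abs_def]
    using dN N0 d\<rho> by (intro differentiable_divide differentiable_diff differentiable_power) auto
  define x1 where "x1 = Re (Y0 - Q)"
  define x2 where "x2 = Im (Y0 - Q)"
  define z1 where "z1 \<tau> = Re (c \<tau> - Q)" for \<tau>
  define z2 where "z2 \<tau> = Im (c \<tau> - Q)" for \<tau>
  have Nz: "N \<tau> = (z1 \<tau>)^2 + (z2 \<tau>)^2" for \<tau> unfolding N_def z1_def z2_def by simp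
  have r1s: "r1^2 = x1^2 + x2^2" unfolding r1_def x1_def x2_def by (simp add: cmod_power2)
  have r2s: "r2^2 = (x1 - z1 0)^2 + (x2 - z2 0)^2" unfolding r2_def x1_def x2_def z1_def z2_def
    by (simp add: cmod_power2)
  have crx: "cr = z1 0 * x2 - z2 0 * x1" unfolding cr_def cross_def x1_def x2_def z1_def z2_def by (simp add: algebra_simps)
  have \<rho>0: "\<rho> 0 = (N 0 + (x1^2 + x2^2) - ((x1 - z1 0)^2 + (x2 - z2 0)^2)) / (2 * N 0)"
    unfolding \<rho>_def r1s r2s ..
  have A0: "A 0 = (cr / N 0)^2"
    unfolding A_def \<rho>0 r1s crx using alg_A0[OF Nz N0] .
  have crnz: "cr \<noteq> 0" using ncol cr_def by simp
  have A0pos: "A 0 > 0" using A0 crnz N0 by simp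
  have d\<sigma>: "\<sigma> differentiable (at 0)" unfolding \<sigma>_def[abs_def]
    using diff_sqrt[OF dA A0pos] by (intro differentiable_mult) auto
  have dy: "y differentiable (at 0)" unfolding y_def[abs_def]
    using cd d\<rho> d\<sigma>
    by (intro differentiable_add differentiable_mult differentiable_diff diff_of_real) auto
  have \<sigma>0: "\<sigma> 0 = cr / N 0"
    unfolding \<sigma>_def A0 using N0 by (simp add: real_sqrt_abs abs_divide sgn_mult_abs)
  have ReY: "Re (y \<tau>) = Re Q + (z1 \<tau> * \<rho> \<tau> - z2 \<tau> * \<sigma> \<tau>)"
    and ImY: "Im (y \<tau>) = Im Q + (z2 \<tau> * \<rho> \<tau> + z1 \<tau> * \<sigma> \<tau>)" for \<tau>
    unfolding y_def z1_def z2_def by simp_all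
  have y0: "y 0 = Y0"
    using alg_y0[OF Nz N0, of x1 x2] unfolding complex_eq_iff ReY ImY \<sigma>0 crx \<rho>0[symmetric]
    by (simp add: x1_def x2_def)
  have "continuous (at 0) A" using dA by (simp add: differentiable_imp_continuous_within)
  then have ev: "\<forall>\<^sub>F \<tau> in nhds 0. A \<tau> > 0" using cont_pos_eventually A0pos by blast
  have "\<forall>\<^sub>F \<tau> in nhds 0. cmod (y \<tau> - c \<tau>) = r2 \<and> cmod (y \<tau> - Q) = r1"
    using ev
  proof eventually_elim
    case (elim \<tau>)
    have Nt: "N \<tau> \<noteq> 0" using elim unfolding A_def by auto
    have s2: "(\<sigma> \<tau>)^2 = r1^2 / N \<tau> - (\<rho> \<tau>)^2" unfolding \<sigma>_def using elim crnz
      by (simp add: power_mult_distrib sgn_if A_def)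
    have "(cmod (y \<tau> - Q))^2 = r1^2"
      unfolding cmod_power2 using alg_circ1[OF Nz Nt s2] by (simp add: ReY ImY)
    moreover have "(cmod (y \<tau> - c \<tau>))^2 = r2^2"
    proof -
      have e1: "Re (y \<tau> - c \<tau>) = z1 \<tau> * \<rho> \<tau> - z2 \<tau> * \<sigma> \<tau> - z1 \<tau>"
        using ReY[of \<tau>] unfolding z1_def by simp
      have e2: "Im (y \<tau> - c \<tau>) = z2 \<tau> * \<rho> \<tau> + z1 \<tau> * \<sigma> \<tau> - z2 \<tau>"
        using ImY[of \<tau>] unfolding z2_def by simp
      show ?thesis unfolding cmod_power2 e1 e2 by (rule alg_circ2[OF Nz Nt s2 \<rho>_def])
    qed
    ultimately show ?case unfolding r1_def r2_def
      by (metis norm_ge_zero power2_eq_imp_eq)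
  qed
  then show ?thesis using y0 dy unfolding r1_def r2_def by blast
qed


lemma all5: "(\<forall>i<(5::nat). Q i) \<longleftrightarrow> Q 0 \<and> Q 1 \<and> Q 2 \<and> Q 3 \<and> Q 4"
proof
  assume "Q 0 \<and> Q 1 \<and> Q 2 \<and> Q 3 \<and> Q 4"
  then show "\<forall>i<5. Q i"
  proof (intro allI impI)
    fix i :: nat assume "i < 5"
    then have "i = 0 \<or> i = 1 \<or> i = 2 \<or> i = 3 \<or> i = 4" by arith
    then show "Q i" using \<open>Q 0 \<and> Q 1 \<and> Q 2 \<and> Q 3 \<and> Q 4\<close> by auto
  qed
qed auto

lemma exp_curve:
  fixes P1 P2 :: complex
  shows "((\<lambda>\<tau>::real. P1 + (P2 - P1) * exp (\<i> * of_real \<tau>)) has_vector_derivative (P2 - P1) * \<i>) (at 0)"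
proof -
  have "((\<lambda>z. P1 + (P2 - P1) * exp (\<i> * z)) has_field_derivative (P2 - P1) * \<i>) (at (of_real 0))"
    by (auto intro!: derivative_eq_intros)
  then show ?thesis by (rule has_vector_derivative_real_field)
qed

lemma exp_curve_norm: "cmod ((P2 - P1) * exp (\<i> * complex_of_real \<tau>)) = cmod (P2 - P1)"
  by (simp add: norm_mult)

lemma test_diff: "(f has_vector_derivative v) (at 0) \<Longrightarrow> f differentiable (at 0)"
  using differentiableI_vector by blast


lemma edge_lin:
  assumes d: "\<forall>i<5. ((\<lambda>\<tau>. \<gamma> \<tau> i) has_vector_derivative v i) (at 0)" and g0: "\<forall>i<5. \<gamma> 0 i = P i"
    and ev: "\<forall>\<^sub>F \<tau> in nhds 0. in_config a (\<gamma> \<tau>)" and cfg: "in_config a P" and pos: "\<forall>i<5. a i > 0"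
    and i: "i < 5"
  shows "inner (P (Suc i mod 5) - P i) (v (Suc i mod 5) - v i) = 0"
proof -
  define j where "j = Suc i mod 5"
  have j: "j < 5" unfolding j_def by simp
  have fd: "((\<lambda>\<tau>. \<gamma> \<tau> j - \<gamma> \<tau> i) has_vector_derivative (v j - v i)) (at 0)"
    using d i j by (intro has_vector_derivative_diff) auto
  have f0: "\<gamma> 0 j - \<gamma> 0 i = P j - P i" using g0 i j by simp
  have na: "cmod (P j - P i) = a i" using cfg i unfolding in_config_def j_def by simp
  then have nz: "P j - P i \<noteq> 0" using pos i by auto
  have dd: "((\<lambda>\<tau>. cmod (\<gamma> \<tau> j - \<gamma> \<tau> i)) has_real_derivative (inner (P j - P i) (v j - v i) / cmod (P j - P i))) (at 0)"
    using dist_deriv[OF fd] f0 nz by simp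
  have "\<forall>\<^sub>F \<tau> in nhds 0. cmod (\<gamma> \<tau> j - \<gamma> \<tau> i) = a i"
    using ev by eventually_elim (use i in \<open>simp add: in_config_def j_def\<close>)
  then have "inner (P j - P i) (v j - v i) / cmod (P j - P i) = 0"
    using const_deriv_zero[OF dd] by blast
  then show ?thesis using nz unfolding j_def by simp
qed

lemma Dc_eq:
  "Dc q1 q2 t q4 s P v = - ((q1 * q4 / cmod (P 0 - P 3)^3) * inner (P 0 - P 3) (v 0 - v 3)
     + (q2 * q4 / cmod (P 1 - P 3)^3) * inner (P 1 - P 3) (v 1 - v 3)
     + (q1 * t / cmod (P 0 - P 2)^3) * inner (P 0 - P 2) (v 0 - v 2)
     + (q2 * s / cmod (P 1 - P 4)^3) * inner (P 1 - P 4) (v 1 - v 4)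
     + (s * t / cmod (P 2 - P 4)^3) * inner (P 2 - P 4) (v 2 - v 4))"
  unfolding Dc_def by (simp add: divide_inverse ac_simps)

lemma crit_C1:
  assumes cfg: "in_config a P" and pos: "\<forall>i<5. a i > 0"
    and nd: "P 0 \<noteq> P 3" "P 1 \<noteq> P 3" "P 0 \<noteq> P 2" "P 1 \<noteq> P 4" "P 2 \<noteq> P 4"
    and ncol: "cross (P 2 - P 4) (P 3 - P 4) \<noteq> 0"
    and crit: "critical_on_config a (coulomb q1 q2 t q4 s) P"
  shows "C1e (P 0) (P 1) (P 2) (P 3) (P 4) (q1 * t / cmod (P 0 - P 2)^3) (s * t / cmod (P 2 - P 4)^3)
           (q1 * q4 / cmod (P 0 - P 3)^3) (q2 * q4 / cmod (P 1 - P 3)^3) = 0"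
proof -
  define c where "c \<tau> = P 1 + (P 2 - P 1) * exp (\<i> * of_real \<tau>)" for \<tau> :: real
  have cd: "(c has_vector_derivative (P 2 - P 1) * \<i>) (at 0)" unfolding c_def[abs_def] by (rule exp_curve)
  have c0: "c 0 = P 2" by (simp add: c_def)
  obtain y where y0: "y 0 = P 3" and yd: "y differentiable (at 0)"
    and yev: "\<forall>\<^sub>F \<tau> in nhds 0. cmod (y \<tau> - c \<tau>) = cmod (P 3 - P 2) \<and> cmod (y \<tau> - P 4) = cmod (P 3 - P 4)"
    using fourbar[of c "P 4" "P 3"] differentiableI_vector[OF cd] c0 ncol by auto
  define v3 where "v3 = vector_derivative y (at 0)"
  have yv: "(y has_vector_derivative v3) (at 0)" using yd vector_derivative_works v3_def by blast
  define \<gamma> where "\<gamma> \<tau> = (\<lambda>i::nat. if i = 2 then c \<tau> else if i = 3 then y \<tau> else P i)" for \<tau>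
  define v where "v = (\<lambda>i::nat. if i = 2 then (P 2 - P 1) * \<i> else if i = 3 then v3 else 0)"
  have gd: "\<forall>i<5. ((\<lambda>\<tau>. \<gamma> \<tau> i) has_vector_derivative v i) (at 0)"
  proof (intro allI impI)
    fix i :: nat assume "i < 5"
    show "((\<lambda>\<tau>. \<gamma> \<tau> i) has_vector_derivative v i) (at 0)"
    proof (cases "i = 2")
      case True then show ?thesis using cd unfolding \<gamma>_def v_def by simp
    next
      case False
      show ?thesis
      proof (cases "i = 3")
        case True then show ?thesis using yv unfolding \<gamma>_def v_def by simp
      next
        case False2: False
        then show ?thesis using False unfolding \<gamma>_def v_def by (simp add: has_vector_derivative_const)
      qed
    qed
  qed
  have g0: "\<forall>i<5. \<gamma> 0 i = P i" using c0 y0 by (simp add: \<gamma>_def)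
  have cfg5: "cmod (P 1 - P 0) = a 0" "cmod (P 2 - P 1) = a 1" "cmod (P 3 - P 2) = a 2"
     "cmod (P 4 - P 3) = a 3" "cmod (P 0 - P 4) = a 4"
    using cfg unfolding in_config_def all5 by (simp_all add: numeral_2_eq_2[symmetric])
  have gev: "\<forall>\<^sub>F \<tau> in nhds 0. in_config a (\<gamma> \<tau>)"
    using yev
  proof eventually_elim
    case (elim \<tau>)
    then show ?case unfolding in_config_def all5 using cfg5
      by (simp add: \<gamma>_def c_def norm_mult norm_minus_commute numeral_2_eq_2[symmetric])
  qed
  have "((\<lambda>\<tau>. coulomb q1 q2 t q4 s (\<gamma> \<tau>)) has_real_derivative 0) (at 0)"
    using crit[unfolded critical_on_config_def, rule_format, of \<gamma> v] g0 gd gev by blast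
  moreover have "((\<lambda>\<tau>. coulomb q1 q2 t q4 s (\<gamma> \<tau>)) has_real_derivative Dc q1 q2 t q4 s P v) (at 0)"
    by (rule coulomb_deriv[OF gd g0 nd])
  ultimately have D0: "Dc q1 q2 t q4 s P v = 0" using DERIV_unique by blast
  have e2: "inner (P 3 - P 2) (v 3 - v 2) = 0"
    using edge_lin[OF gd g0 gev cfg pos, of 2] by simp
  have e3: "inner (P 4 - P 3) (v 4 - v 3) = 0"
    using edge_lin[OF gd g0 gev cfg pos, of 3] by simp
  show ?thesis
  proof (rule motion1)
    show "v 2 = \<i> * (P 2 - P 1)" by (simp add: v_def)
    show "inner (P 3 - P 2) (v 3 - v 2) = 0" by (rule e2)
    show "inner (P 4 - P 3) (0 - v 3) = 0" using e3 by (simp add: v_def)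
    show "q1 * q4 / cmod (P 0 - P 3) ^ 3 * inner (P 0 - P 3) (0 - v 3) +
        q2 * q4 / cmod (P 1 - P 3) ^ 3 * inner (P 1 - P 3) (0 - v 3) +
        q1 * t / cmod (P 0 - P 2) ^ 3 * inner (P 0 - P 2) (0 - v 2) +
        s * t / cmod (P 2 - P 4) ^ 3 * inner (P 2 - P 4) (v 2 - 0) = 0"
      using D0 unfolding Dc_eq by (simp add: v_def)
  qed
qed

lemma crit_C2:
  assumes cfg: "in_config a P" and pos: "\<forall>i<5. a i > 0"
    and nd: "P 0 \<noteq> P 3" "P 1 \<noteq> P 3" "P 0 \<noteq> P 2" "P 1 \<noteq> P 4" "P 2 \<noteq> P 4"
    and ncol: "cross (P 4 - P 2) (P 3 - P 2) \<noteq> 0"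
    and crit: "critical_on_config a (coulomb q1 q2 t q4 s) P"
  shows "C2e (P 0) (P 1) (P 2) (P 3) (P 4) (q2 * s / cmod (P 1 - P 4)^3) (s * t / cmod (P 2 - P 4)^3)
           (q1 * q4 / cmod (P 0 - P 3)^3) (q2 * q4 / cmod (P 1 - P 3)^3) = 0"
proof -
  define c where "c \<tau> = P 0 + (P 4 - P 0) * exp (\<i> * of_real \<tau>)" for \<tau> :: real
  have cd: "(c has_vector_derivative (P 4 - P 0) * \<i>) (at 0)" unfolding c_def[abs_def] by (rule exp_curve)
  have c0: "c 0 = P 4" by (simp add: c_def)
  obtain y where y0: "y 0 = P 3" and yd: "y differentiable (at 0)"
    and yev: "\<forall>\<^sub>F \<tau> in nhds 0. cmod (y \<tau> - c \<tau>) = cmod (P 3 - P 4) \<and> cmod (y \<tau> - P 2) = cmod (P 3 - P 2)"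
    using fourbar[of c "P 2" "P 3"] differentiableI_vector[OF cd] c0 ncol by auto
  define v3 where "v3 = vector_derivative y (at 0)"
  have yv: "(y has_vector_derivative v3) (at 0)" using yd vector_derivative_works v3_def by blast
  define \<gamma> where "\<gamma> \<tau> = (\<lambda>i::nat. if i = 4 then c \<tau> else if i = 3 then y \<tau> else P i)" for \<tau>
  define v where "v = (\<lambda>i::nat. if i = 4 then (P 4 - P 0) * \<i> else if i = 3 then v3 else 0)"
  have gd: "\<forall>i<5. ((\<lambda>\<tau>. \<gamma> \<tau> i) has_vector_derivative v i) (at 0)"
  proof (intro allI impI)
    fix i :: nat assume "i < 5"
    show "((\<lambda>\<tau>. \<gamma> \<tau> i) has_vector_derivative v i) (at 0)"
    proof (cases "i = 4")
      case True then show ?thesis using cd unfolding \<gamma>_def v_def by simp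
    next
      case False
      show ?thesis
      proof (cases "i = 3")
        case True then show ?thesis using yv unfolding \<gamma>_def v_def by simp
      next
        case False2: False
        then show ?thesis using False unfolding \<gamma>_def v_def by (simp add: has_vector_derivative_const)
      qed
    qed
  qed
  have g0: "\<forall>i<5. \<gamma> 0 i = P i" using c0 y0 by (simp add: \<gamma>_def)
  have cfg5: "cmod (P 1 - P 0) = a 0" "cmod (P 2 - P 1) = a 1" "cmod (P 3 - P 2) = a 2"
     "cmod (P 4 - P 3) = a 3" "cmod (P 0 - P 4) = a 4"
    using cfg unfolding in_config_def all5 by (simp_all add: numeral_2_eq_2[symmetric])
  have gev: "\<forall>\<^sub>F \<tau> in nhds 0. in_config a (\<gamma> \<tau>)"
    using yev
  proof eventually_elim
    case (elim \<tau>)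
    then show ?case unfolding in_config_def all5 using cfg5
      by (simp add: \<gamma>_def c_def norm_mult norm_minus_commute numeral_2_eq_2[symmetric])
  qed
  have "((\<lambda>\<tau>. coulomb q1 q2 t q4 s (\<gamma> \<tau>)) has_real_derivative 0) (at 0)"
    using crit[unfolded critical_on_config_def, rule_format, of \<gamma> v] g0 gd gev by blast
  moreover have "((\<lambda>\<tau>. coulomb q1 q2 t q4 s (\<gamma> \<tau>)) has_real_derivative Dc q1 q2 t q4 s P v) (at 0)"
    by (rule coulomb_deriv[OF gd g0 nd])
  ultimately have D0: "Dc q1 q2 t q4 s P v = 0" using DERIV_unique by blast
  have e2: "inner (P 3 - P 2) (v 3 - v 2) = 0"
    using edge_lin[OF gd g0 gev cfg pos, of 2] by simp
  have e3: "inner (P 4 - P 3) (v 4 - v 3) = 0"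
    using edge_lin[OF gd g0 gev cfg pos, of 3] by simp
  show ?thesis
  proof (rule motion2)
    show "v 4 = \<i> * (P 4 - P 0)" by (simp add: v_def)
    show "inner (P 3 - P 2) (v 3 - 0) = 0" using e2 by (simp add: v_def)
    show "inner (P 4 - P 3) (v 4 - v 3) = 0" by (rule e3)
    show "q1 * q4 / cmod (P 0 - P 3) ^ 3 * inner (P 0 - P 3) (0 - v 3) +
        q2 * q4 / cmod (P 1 - P 3) ^ 3 * inner (P 1 - P 3) (0 - v 3) +
        q2 * s / cmod (P 1 - P 4) ^ 3 * inner (P 1 - P 4) (0 - v 4) +
        s * t / cmod (P 2 - P 4) ^ 3 * inner (P 2 - P 4) (0 - v 4) = 0"
      using D0 unfolding Dc_eq by (simp add: v_def)
  qed
qed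

lemma suff_crit:
  assumes cfg: "in_config a P" and pos: "\<forall>i<5. a i > 0"
    and nd: "P 0 \<noteq> P 3" "P 1 \<noteq> P 3" "P 0 \<noteq> P 2" "P 1 \<noteq> P 4" "P 2 \<noteq> P 4"
    and K: "cross (P 3 - P 2) (P 3 - P 4) \<noteq> 0"
    and c1: "C1e (P 0) (P 1) (P 2) (P 3) (P 4) (q1 * t / cmod (P 0 - P 2)^3) (s * t / cmod (P 2 - P 4)^3)
           (q1 * q4 / cmod (P 0 - P 3)^3) (q2 * q4 / cmod (P 1 - P 3)^3) = 0"
    and c2: "C2e (P 0) (P 1) (P 2) (P 3) (P 4) (q2 * s / cmod (P 1 - P 4)^3) (s * t / cmod (P 2 - P 4)^3)
           (q1 * q4 / cmod (P 0 - P 3)^3) (q2 * q4 / cmod (P 1 - P 3)^3) = 0"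
  shows "critical_on_config a (coulomb q1 q2 t q4 s) P"
  unfolding critical_on_config_def
proof (intro allI impI, elim conjE)
  fix \<gamma> :: "real \<Rightarrow> nat \<Rightarrow> complex" and v :: "nat \<Rightarrow> complex"
  assume g0: "\<forall>i<5. \<gamma> 0 i = P i" and gd: "\<forall>i<5. ((\<lambda>\<tau>. \<gamma> \<tau> i) has_vector_derivative v i) (at 0)"
    and gev: "\<forall>\<^sub>F \<tau> in nhds 0. in_config a (\<gamma> \<tau>)"
  have cfg5: "cmod (P 1 - P 0) = a 0" "cmod (P 2 - P 1) = a 1" "cmod (P 0 - P 4) = a 4"
    using cfg unfolding in_config_def all5 by (simp_all add: numeral_2_eq_2[symmetric])
  have pos5: "a 0 > 0" "a 1 > 0" "a 4 > 0" using pos by simp_all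
  have n: "P 2 \<noteq> P 1" "P 4 \<noteq> P 0" "P 1 \<noteq> P 0" using cfg5 pos5 by auto
  have ed: "inner (P 1 - P 0) (v 1 - v 0) = 0" "inner (P 2 - P 1) (v 2 - v 1) = 0"
    "inner (P 3 - P 2) (v 3 - v 2) = 0" "inner (P 4 - P 3) (v 4 - v 3) = 0"
    "inner (P 0 - P 4) (v 0 - v 4) = 0"
    using edge_lin[OF gd g0 gev cfg pos, of 0] edge_lin[OF gd g0 gev cfg pos, of 1]
      edge_lin[OF gd g0 gev cfg pos, of 2] edge_lin[OF gd g0 gev cfg pos, of 3]
      edge_lin[OF gd g0 gev cfg pos, of 4] by (simp_all add: numeral_2_eq_2[symmetric])
  have "Dc q1 q2 t q4 s P v = 0"
    unfolding Dc_eq using suff[OF c1 c2 K n ed] by simp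
  then show "((\<lambda>\<tau>. coulomb q1 q2 t q4 s (\<gamma> \<tau>)) has_real_derivative 0) (at 0)"
    using coulomb_deriv[OF gd g0 nd, of q1 q2 t q4 s] by simp
qed

lemma sc_pos:
  assumes "strictly_convex P" "i < 5" "j < 5" "j \<noteq> i" "j \<noteq> Suc i mod 5"
    "k < 5" "l < 5" "l \<noteq> k" "l \<noteq> Suc k mod 5"
  shows "cross (P (Suc i mod 5) - P i) (P j - P i) * cross (P (Suc k mod 5) - P k) (P l - P k) > 0"
  using assms(1) unfolding strictly_convex_def
proof (elim disjE)
  assume h: "\<forall>i<5. \<forall>j<5. j \<noteq> i \<and> j \<noteq> Suc i mod 5 \<longrightarrow> 0 < cross (P (Suc i mod 5) - P i) (P j - P i)"
  show ?thesis using h assms(2-) by (intro mult_pos_pos) auto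
next
  assume h: "\<forall>i<5. \<forall>j<5. j \<noteq> i \<and> j \<noteq> Suc i mod 5 \<longrightarrow> cross (P (Suc i mod 5) - P i) (P j - P i) < 0"
  show ?thesis using h assms(2-) by (intro mult_neg_neg) auto
qed

lemma C1e_form:
  "C1e p0 p1 p2 p3 p4 u02 u24 u03 u13 =
     cross (p3 - p2) (p4 - p2) * (u02 * cross (p2 - p1) (p0 - p1) + u24 * cross (p2 - p1) (p4 - p1))
     - (u03 * cross (p4 - p3) (p0 - p3) + u13 * cross (p4 - p3) (p1 - p3)) * cross (p2 - p1) (p3 - p1)"
  unfolding C1e_def by (simp add: cross_def algebra_simps)

lemma C2e_form:
  "C2e p0 p1 p2 p3 p4 u14 u24 u03 u13 =
     - cross (p3 - p2) (p4 - p2) * (u14 * cross (p0 - p4) (p1 - p4) + u24 * cross (p0 - p4) (p2 - p4))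
     + (u03 * cross (p3 - p2) (p0 - p2) + u13 * cross (p3 - p2) (p1 - p2)) * cross (p0 - p4) (p3 - p4)"
  unfolding C2e_def by (simp add: cross_def algebra_simps)


theorem theorem3:
  fixes a :: "nat \<Rightarrow> real" and q1 q2 q4 :: real and P :: "nat \<Rightarrow> complex"
  assumes "\<forall>i<5. a i > 0"
    and "q1 > 0" and "q2 > 0" and "q4 > 0"
    and "in_config a P" and "strictly_convex P"
  shows "\<exists>!st :: real \<times> real. fst st > 0 \<and> snd st > 0 \<and>
           critical_on_config a (coulomb q1 q2 (snd st) q4 (fst st)) P"
proof -
  note pos = assms(1) and cfg = assms(5) and sc = assms(6)
  have e: "\<And>i j k l. i < 5 \<Longrightarrow> j < 5 \<Longrightarrow> j \<noteq> i \<Longrightarrow> j \<noteq> Suc i mod 5 \<Longrightarrow>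
     k < 5 \<Longrightarrow> l < 5 \<Longrightarrow> l \<noteq> k \<Longrightarrow> l \<noteq> Suc k mod 5 \<Longrightarrow>
     cross (P (Suc i mod 5) - P i) (P j - P i) * cross (P (Suc k mod 5) - P k) (P l - P k) > 0"
    using sc_pos[OF sc] by blast
  define K where "K = cross (P 3 - P 2) (P 4 - P 2)"
  define X10 where "X10 = cross (P 2 - P 1) (P 0 - P 1)"
  define X14 where "X14 = cross (P 2 - P 1) (P 4 - P 1)"
  define X30 where "X30 = cross (P 4 - P 3) (P 0 - P 3)"
  define X31 where "X31 = cross (P 4 - P 3) (P 1 - P 3)"
  define X13 where "X13 = cross (P 2 - P 1) (P 3 - P 1)"
  define X41 where "X41 = cross (P 0 - P 4) (P 1 - P 4)"
  define X42 where "X42 = cross (P 0 - P 4) (P 2 - P 4)"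
  define X20 where "X20 = cross (P 3 - P 2) (P 0 - P 2)"
  define X21 where "X21 = cross (P 3 - P 2) (P 1 - P 2)"
  define X43 where "X43 = cross (P 0 - P 4) (P 3 - P 4)"
  define X32 where "X32 = cross (P 4 - P 3) (P 2 - P 3)"
  have p1: "K * X10 > 0" using e[of 2 4 1 0] unfolding K_def X10_def by (simp add: numeral_2_eq_2[symmetric])
  have p2: "K * X14 > 0" using e[of 2 4 1 4] unfolding K_def X14_def by (simp add: numeral_2_eq_2[symmetric])
  have p3: "X30 * X13 > 0" using e[of 3 0 1 3] unfolding X30_def X13_def by (simp add: numeral_2_eq_2[symmetric])
  have p4: "X31 * X13 > 0" using e[of 3 1 1 3] unfolding X31_def X13_def by (simp add: numeral_2_eq_2[symmetric])
  have p5: "K * X41 > 0" using e[of 2 4 4 1] unfolding K_def X41_def by (simp add: numeral_2_eq_2[symmetric])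
  have p6: "K * X42 > 0" using e[of 2 4 4 2] unfolding K_def X42_def by (simp add: numeral_2_eq_2[symmetric])
  have p7: "X20 * X43 > 0" using e[of 2 0 4 3] unfolding X20_def X43_def by (simp add: numeral_2_eq_2[symmetric])
  have p8: "X21 * X43 > 0" using e[of 2 1 4 3] unfolding X21_def X43_def by (simp add: numeral_2_eq_2[symmetric])
  have p9: "X32 * X32 > 0" using e[of 3 2 3 2] unfolding X32_def by (simp add: numeral_2_eq_2[symmetric])
  have p10: "X30 * X30 > 0" using e[of 3 0 3 0] unfolding X30_def by (simp add: numeral_2_eq_2[symmetric])
  have p11: "X31 * X31 > 0" using e[of 3 1 3 1] unfolding X31_def by (simp add: numeral_2_eq_2[symmetric])
  have Knz: "K \<noteq> 0" using p1 by auto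
  have nd: "P 0 \<noteq> P 3" "P 1 \<noteq> P 3" "P 0 \<noteq> P 2" "P 1 \<noteq> P 4" "P 2 \<noteq> P 4"
  proof -
    show "P 0 \<noteq> P 3" using p10 unfolding X30_def by (auto simp: cross_def algebra_simps)
    show "P 1 \<noteq> P 3" using p11 unfolding X31_def by (auto simp: cross_def algebra_simps)
    show "P 0 \<noteq> P 2" using p1 unfolding X10_def by (auto simp: cross_def algebra_simps)
    show "P 1 \<noteq> P 4" using p5 unfolding X41_def by (auto simp: cross_def algebra_simps)
    show "P 2 \<noteq> P 4" using p1 unfolding K_def by (auto simp: cross_def algebra_simps)
  qed
  have ncol1: "cross (P 2 - P 4) (P 3 - P 4) \<noteq> 0"
  proof -
    have "cross (P 2 - P 4) (P 3 - P 4) = X32" unfolding X32_def by (simp add: cross_def algebra_simps)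
    then show ?thesis using p9 by auto
  qed
  have ncol2: "cross (P 4 - P 2) (P 3 - P 2) \<noteq> 0"
  proof -
    have "cross (P 4 - P 2) (P 3 - P 2) = - K" unfolding K_def by (simp add: cross_def algebra_simps)
    then show ?thesis using Knz by auto
  qed
  have Knz': "cross (P 3 - P 2) (P 3 - P 4) \<noteq> 0"
  proof -
    have "cross (P 3 - P 2) (P 3 - P 4) = - K" unfolding K_def by (simp add: cross_def algebra_simps)
    then show ?thesis using Knz by auto
  qed
  define d03 where "d03 = cmod (P 0 - P 3)"
  define d13 where "d13 = cmod (P 1 - P 3)"
  define d02 where "d02 = cmod (P 0 - P 2)"
  define d14 where "d14 = cmod (P 1 - P 4)"
  define d24 where "d24 = cmod (P 2 - P 4)"
  have dpos: "d03 > 0" "d13 > 0" "d02 > 0" "d14 > 0" "d24 > 0"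
    using nd unfolding d03_def d13_def d02_def d14_def d24_def by auto
  define u03 where "u03 = q1 * q4 / d03^3"
  define u13 where "u13 = q2 * q4 / d13^3"
  have u: "u03 > 0" "u13 > 0" using dpos assms(2-4) unfolding u03_def u13_def by auto
  define A1 where "A1 = q1 * (K * X10 / d02^3)"
  define B1 where "B1 = K * X14 / d24^3"
  define G1 where "G1 = u03 * (X30 * X13) + u13 * (X31 * X13)"
  define A2 where "A2 = q2 * (K * X41 / d14^3)"
  define B2 where "B2 = K * X42 / d24^3"
  define G2 where "G2 = u03 * (X20 * X43) + u13 * (X21 * X43)"
  have posc: "A1 > 0" "B1 > 0" "G1 > 0" "A2 > 0" "B2 > 0" "G2 > 0"
    unfolding A1_def B1_def G1_def A2_def B2_def G2_def
    using p1 p2 p3 p4 p5 p6 p7 p8 u dpos assms(2,3)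
    by (auto intro!: mult_pos_pos add_pos_pos divide_pos_pos)
  have C1id: "C1e (P 0) (P 1) (P 2) (P 3) (P 4) (q1 * t / d02^3) (s * t / d24^3) u03 u13
       = t * (A1 + s * B1) - G1" for s t
    unfolding C1e_form A1_def B1_def G1_def K_def[symmetric] X10_def[symmetric] X14_def[symmetric] X30_def[symmetric]
        X31_def[symmetric] X13_def[symmetric]
    by (simp add: algebra_simps)
  have C2id: "C2e (P 0) (P 1) (P 2) (P 3) (P 4) (q2 * s / d14^3) (s * t / d24^3) u03 u13
       = G2 - s * (A2 + t * B2)" for s t
    unfolding C2e_form A2_def B2_def G2_def K_def[symmetric] X41_def[symmetric] X42_def[symmetric] X20_def[symmetric]
        X21_def[symmetric] X43_def[symmetric]
    by (simp add: algebra_simps)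
  have key: "critical_on_config a (coulomb q1 q2 t q4 s) P \<longleftrightarrow>
      t * (A1 + s * B1) = G1 \<and> s * (A2 + t * B2) = G2" for s t
  proof
    assume cr: "critical_on_config a (coulomb q1 q2 t q4 s) P"
    have "C1e (P 0) (P 1) (P 2) (P 3) (P 4) (q1 * t / d02^3) (s * t / d24^3) u03 u13 = 0"
      using crit_C1[OF cfg pos nd ncol1 cr] unfolding d02_def d24_def u03_def u13_def d03_def d13_def .
    moreover have "C2e (P 0) (P 1) (P 2) (P 3) (P 4) (q2 * s / d14^3) (s * t / d24^3) u03 u13 = 0"
      using crit_C2[OF cfg pos nd ncol2 cr] unfolding d14_def d24_def u03_def u13_def d03_def d13_def .
    ultimately show "t * (A1 + s * B1) = G1 \<and> s * (A2 + t * B2) = G2"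
      unfolding C1id C2id by simp
  next
    assume h: "t * (A1 + s * B1) = G1 \<and> s * (A2 + t * B2) = G2"
    have c1: "C1e (P 0) (P 1) (P 2) (P 3) (P 4) (q1 * t / d02^3) (s * t / d24^3) u03 u13 = 0"
      unfolding C1id using h by simp
    have c2: "C2e (P 0) (P 1) (P 2) (P 3) (P 4) (q2 * s / d14^3) (s * t / d24^3) u03 u13 = 0"
      unfolding C2id using h by simp
    show "critical_on_config a (coulomb q1 q2 t q4 s) P"
      by (rule suff_crit[OF cfg pos nd Knz' c1[unfolded d02_def d24_def u03_def u13_def d03_def d13_def]
            c2[unfolded d14_def d24_def u03_def u13_def d03_def d13_def]])
  qed
  have "\<exists>!st::real\<times>real. fst st > 0 \<and> snd st > 0 \<and>
     snd st * (A1 + fst st * B1) = G1 \<and> fst st * (A2 + snd st * B2) = G2"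
    by (rule quad_unique[OF posc])
  then show ?thesis using key by simp
qed
end
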